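(* Let $n$ be a positive integer. Define $g:T_n\to D_n$ by $g(A,B,C)=r(A,B,C)$ if $(A,B,C)\in R_n$; $g(A,B,C)=s(A,B,C)$ if $(A,B,C)\in U_n$; $g(A,B,C)=t(A,B,C)$ if $(A,B,C)\in V_n\setminus U_n$; and $g(A,B,C)=t(z(A,B,C))$ if $(A,B,C)\in J_n$. Then $g$ is a bijection from $T_n$ onto $D_n$. (In particular $(2n+1)\binom{2n}{n}=\sum_{i+j+k=n}\binom{2i}{i}\binom{2j}{j}\binom{2k}{k}$, the sum over nonnegative integer triples.)
   Context: A lattice path here is a finite (possibly empty) sequence of steps, each an up step $(1,1)$ or a down step $(1,-1)$, drawn as a polygonal line from a given starting lattice point; its lattice points are its starting point and the endpoints of its steps; the height of a point is its vertical coordinate. Concatenation of paths means drawing them successively, each starting at the endpoint of the preceding one, the first starting at $(0,0)$. $T_n$ is the set of ordered triples $(A,B,C)$ of lattice paths such that for some nonnegative integers $i,j,k$ with $i+j+k=n$, $A$ has $i$ up and $i$ down steps, $B$ has $j$ up and $j$ down steps, and $C$ has $k$ up and $k$ down steps; each of $A,B,C$ is regarded as drawn starting (and hence ending) on the horizontal axis, and heights of points of $C$ refer to this drawing. $D_n$ is the set of pairs $(H,X)$ where $H$ is a lattice path with $n$ up and $n$ down steps drawn from $(0,0)$ to $(2n,0)$ and $X$ is one of the $2n+1$ lattice points of $H$. $R_n$: triples in $T_n$ with $C$ empty. $U_n$: triples with $C$ having a point strictly above the horizontal axis and $B$ either empty or ending with a down step. $V_n$: triples with $C$ having a point strictly below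 the horizontal axis and $B$ either empty or ending with an up step. $I_n=U_n\cap V_n$. $J_n=T_n\setminus(R_n\cup U_n\cup V_n)$. $r:R_n\to D_n$: $r(A,B,\emptyset)=(H,X)$ with $H$ the concatenation of $A$ and $B$ and $X$ the point where $A$ and $B$ meet. $s:U_n\to D_n$: let $K$ be the leftmost point of $C$ of maximal height, cutting $C$ into left part $C_1$ and right part $C_2$; $s(A,B,C)=(H,X)$ with $H$ the concatenation of $C_1,A,B,C_2$ and $X$ the point where $A$ ends and $B$ begins. $t:V_n\to D_n$: same as $s$ but with $K$ the leftmost point of $C$ of minimal height. $z:J_n\to I_n$: $z(A,B,C)=(A,\emptyset,BC)$, where $BC$ is the concatenation of $B$ followed by $C$. *)

theory Defs
  imports Main
begin

text \<open>A lattice path is a list of steps: True = up step (1,1), False = down step (1,-1).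
  Its lattice points are indexed by 0..length P (the point after the first i steps);
  the height of point i (path drawn from height 0) is hgt P i.\<close>

type_synonym path = "bool list"

definition stepval :: "bool \<Rightarrow> int" where
  "stepval b = (if b then 1 else -1)"

definition hgt :: "path \<Rightarrow> nat \<Rightarrow> int" where
  "hgt P i = sum_list (map stepval (take i P))"

definition ups :: "path \<Rightarrow> nat" where
  "ups P = length (filter (\<lambda>b. b) P)"

definition downs :: "path \<Rightarrow> nat" where
  "downs P = length (filter (\<lambda>b. \<not> b) P)"

definition T :: "nat \<Rightarrow> (path \<times> path \<times> path) set" where
  "T n = {(A, B, C). \<exists>i j k. i + j + k = n \<and> ups A = i \<and> downs A = i
            \<and> ups B = j \<and> downs B = j \<and> ups C = k \<and> downs C = k}"

text \<open>D n: pairs (H, X) with H a path with n up and n down steps from (0,0) to (2n,0),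
  X one of its 2n+1 lattice points, represented by its index (x-coordinate) 0..2n.\<close>
definition D :: "nat \<Rightarrow> (path \<times> nat) set" where
  "D n = {(H, x). ups H = n \<and> downs H = n \<and> x \<le> length H}"

definition R :: "nat \<Rightarrow> (path \<times> path \<times> path) set" where
  "R n = {(A, B, C). (A, B, C) \<in> T n \<and> C = []}"

definition U :: "nat \<Rightarrow> (path \<times> path \<times> path) set" where
  "U n = {(A, B, C). (A, B, C) \<in> T n \<and> (\<exists>i \<le> length C. hgt C i > 0)
            \<and> (B = [] \<or> last B = False)}"

definition V :: "nat \<Rightarrow> (path \<times> path \<times> path) set" where
  "V n = {(A, B, C). (A, B, C) \<in> T n \<and> (\<exists>i \<le> length C. hgt C i < 0)
            \<and> (B = [] \<or> last B = True)}"

definition I :: "nat \<Rightarrow> (path \<times> path \<times> path) set" where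
  "I n = U n \<inter> V n"

definition J :: "nat \<Rightarrow> (path \<times> path \<times> path) set" where
  "J n = T n - (R n \<union> U n \<union> V n)"

definition leftmost_max :: "path \<Rightarrow> nat" where
  "leftmost_max C = (LEAST i. i \<le> length C \<and> (\<forall>j \<le> length C. hgt C j \<le> hgt C i))"

definition leftmost_min :: "path \<Rightarrow> nat" where
  "leftmost_min C = (LEAST i. i \<le> length C \<and> (\<forall>j \<le> length C. hgt C i \<le> hgt C j))"

definition rmap :: "path \<times> path \<times> path \<Rightarrow> path \<times> nat" where
  "rmap = (\<lambda>(A, B, C). (A @ B, length A))"

definition smap :: "path \<times> path \<times> path \<Rightarrow> path \<times> nat" where
  "smap = (\<lambda>(A, B, C). let k = leftmost_max C in
      (take k C @ A @ B @ drop k C, length (take k C) + length A))"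

definition tmap :: "path \<times> path \<times> path \<Rightarrow> path \<times> nat" where
  "tmap = (\<lambda>(A, B, C). let k = leftmost_min C in
      (take k C @ A @ B @ drop k C, length (take k C) + length A))"

definition zmap :: "path \<times> path \<times> path \<Rightarrow> path \<times> path \<times> path" where
  "zmap = (\<lambda>(A, B, C). (A, [], B @ C))"

definition gmap :: "nat \<Rightarrow> path \<times> path \<times> path \<Rightarrow> path \<times> nat" where
  "gmap n x = (if x \<in> R n then rmap x
               else if x \<in> U n then smap x
               else if x \<in> V n then tmap x
               else tmap (zmap x))"

end

theory Submission
  imports Defs
begin


lemma hgt_0[simp]: "hgt P 0 = 0" by (simp add: hgt_def)
lemma hgt_Nil[simp]: "hgt [] i = 0" by (simp add: hgt_def)

lemma hgt_append: "hgt (P @ Q) i = hgt P i + hgt Q (i - length P)"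
  by (simp add: hgt_def)

lemma hgt_ge: "length P \<le> i \<Longrightarrow> hgt P i = hgt P (length P)"
  by (simp add: hgt_def)

lemma hgt_Suc: "i < length P \<Longrightarrow> hgt P (Suc i) = hgt P i + stepval (P ! i)"
  by (simp add: hgt_def take_Suc_conv_app_nth)

lemma hgt_take: "hgt (take m P) i = hgt P (min i m)"
  by (simp add: hgt_def min.commute)

lemma hgt_drop: "m \<le> length P \<Longrightarrow> hgt (drop m P) i = hgt P (m + i) - hgt P m"
proof -
  have "take (m + i) P = take m P @ take i (drop m P)" by (simp add: take_add)
  then show ?thesis by (simp add: hgt_def)
qed

lemma ups_append[simp]: "ups (P @ Q) = ups P + ups Q" by (simp add: ups_def)
lemma downs_append[simp]: "downs (P @ Q) = downs P + downs Q" by (simp add: downs_def)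
lemma ups_Nil[simp]: "ups [] = 0" by (simp add: ups_def)
lemma downs_Nil[simp]: "downs [] = 0" by (simp add: downs_def)

lemma ups_downs_len: "ups P + downs P = length P"
  by (induction P) (auto simp: ups_def downs_def)

lemma hgt_len: "hgt P (length P) = int (ups P) - int (downs P)"
  by (induction P) (auto simp: ups_def downs_def hgt_def stepval_def)

lemma stepval_cases: "stepval b = 1 \<or> stepval b = -1" by (simp add: stepval_def)

lemma hgt_step: "i < length P \<Longrightarrow> hgt P (Suc i) = hgt P i + 1 \<or> hgt P (Suc i) = hgt P i - 1"
  using hgt_Suc[of i P] stepval_cases[of "P!i"] by auto

lemma hgt_up: "i < length P \<Longrightarrow> hgt P (Suc i) = hgt P i + 1 \<Longrightarrow> P ! i"
  using hgt_Suc[of i P] by (auto simp: stepval_def split: if_splits)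

lemma hgt_down: "i < length P \<Longrightarrow> hgt P (Suc i) = hgt P i - 1 \<Longrightarrow> \<not> P ! i"
  using hgt_Suc[of i P] by (auto simp: stepval_def split: if_splits)

lemma ivt_up: "i \<le> j \<Longrightarrow> j \<le> length P \<Longrightarrow> hgt P i \<le> c \<Longrightarrow> c \<le> hgt P j
   \<Longrightarrow> \<exists>m. i \<le> m \<and> m \<le> j \<and> hgt P m = c"
proof (induction j)
  case 0 then show ?case by auto
next
  case (Suc j)
  show ?case
  proof (cases "c = hgt P (Suc j)")
    case True then show ?thesis using Suc by auto
  next
    case False
    then have "i \<noteq> Suc j" using Suc by auto
    then have "i \<le> j" using Suc by auto
    moreover have "c \<le> hgt P j" using hgt_step[of j P] Suc False by auto
    ultimately show ?thesis using Suc by fastforce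
  qed
qed

lemma ivt_down: "i \<le> j \<Longrightarrow> j \<le> length P \<Longrightarrow> hgt P i \<ge> c \<Longrightarrow> c \<ge> hgt P j
   \<Longrightarrow> \<exists>m. i \<le> m \<and> m \<le> j \<and> hgt P m = c"
proof (induction j)
  case 0 then show ?case by auto
next
  case (Suc j)
  show ?case
  proof (cases "c = hgt P (Suc j)")
    case True then show ?thesis using Suc by auto
  next
    case False
    then have "i \<noteq> Suc j" using Suc by auto
    then have "i \<le> j" using Suc by auto
    moreover have "c \<ge> hgt P j" using hgt_step[of j P] Suc False by auto
    ultimately show ?thesis using Suc by fastforce
  qed
qed

lemma ivt: "i \<le> length P \<Longrightarrow> j \<le> length P \<Longrightarrow> hgt P i \<le> c \<Longrightarrow> c \<le> hgt P j
   \<Longrightarrow> \<exists>m. min i j \<le> m \<and> m \<le> max i j \<and> hgt P m = c"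
proof (cases "i \<le> j")
  case True
  assume "i \<le> length P" "j \<le> length P" "hgt P i \<le> c" "c \<le> hgt P j"
  then show ?thesis using ivt_up[of i j P c] True by auto
next
  case False
  assume "i \<le> length P" "j \<le> length P" "hgt P i \<le> c" "c \<le> hgt P j"
  then show ?thesis using ivt_down[of j i P c] False by auto
qed

definition fl :: "path \<Rightarrow> path" where "fl P = map Not P"

lemma hgt_fl[simp]: "hgt (fl P) i = - hgt P i"
proof -
  have "\<And>Q. sum_list (map stepval (map Not Q)) = - sum_list (map stepval Q)"
    subgoal for Q by (induction Q) (auto simp: stepval_def)
    done
  then show ?thesis by (simp add: hgt_def fl_def take_map)
qed

lemma ups_fl[simp]: "ups (fl P) = downs P" by (simp add: ups_def downs_def fl_def comp_def)
lemma downs_fl[simp]: "downs (fl P) = ups P" by (simp add: ups_def downs_def fl_def comp_def)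
lemma fl_fl[simp]: "fl (fl P) = P" by (simp add: fl_def comp_def)
lemma length_fl[simp]: "length (fl P) = length P" by (simp add: fl_def)
lemma fl_Nil[simp]: "fl P = [] \<longleftrightarrow> P = []" by (simp add: fl_def)
lemma last_fl: "P \<noteq> [] \<Longrightarrow> last (fl P) = (\<not> last P)" by (simp add: fl_def last_map)
lemma take_fl: "take k (fl P) = fl (take k P)" by (simp add: fl_def take_map)
lemma drop_fl: "drop k (fl P) = fl (drop k P)" by (simp add: fl_def drop_map)
lemma fl_append: "fl (P @ Q) = fl P @ fl Q" by (simp add: fl_def)

lemma leftmost_max_fl: "leftmost_max (fl C) = leftmost_min C"
  by (simp add: leftmost_max_def leftmost_min_def)



lemma bal_iff: "ups P = downs P \<longleftrightarrow> hgt P (length P) = 0"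
  by (simp add: hgt_len)

lemma T_iff: "(A, B, C) \<in> T n \<longleftrightarrow> ups A = downs A \<and> ups B = downs B \<and> ups C = downs C
   \<and> ups A + ups B + ups C = n"
  by (auto simp: T_def)

lemma D_iff: "(H, x) \<in> D n \<longleftrightarrow> ups H = n \<and> downs H = n \<and> x \<le> length H"
  by (simp add: D_def)

lemma ex_min_hgt: "\<exists>i. i \<le> length C \<and> (\<forall>j \<le> length C. hgt C i \<le> hgt C j)"
proof -
  let ?S = "hgt C ` {..length C}"
  have "finite ?S" "?S \<noteq> {}" by auto
  then have "Min ?S \<in> ?S" by (rule Min_in)
  then obtain i where "i \<le> length C" "hgt C i = Min ?S" by (metis atMost_iff imageE)
  moreover have "\<forall>j \<le> length C. Min ?S \<le> hgt C j" using \<open>finite ?S\<close> by auto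
  ultimately show ?thesis by auto
qed

lemma lmin_props:
  shows "leftmost_min C \<le> length C"
    and "\<And>j. j \<le> length C \<Longrightarrow> hgt C (leftmost_min C) \<le> hgt C j"
    and "\<And>i. i < leftmost_min C \<Longrightarrow> hgt C i > hgt C (leftmost_min C)"
proof -
  let ?P = "\<lambda>i. i \<le> length C \<and> (\<forall>j \<le> length C. hgt C i \<le> hgt C j)"
  have ex: "\<exists>i. ?P i" by (rule ex_min_hgt)
  have P: "?P (leftmost_min C)" unfolding leftmost_min_def by (rule LeastI_ex[OF ex])
  then show "leftmost_min C \<le> length C" "\<And>j. j \<le> length C \<Longrightarrow> hgt C (leftmost_min C) \<le> hgt C j"
    by auto
  fix i assume i: "i < leftmost_min C"
  then have "\<not> ?P i" unfolding leftmost_min_def by (rule not_less_Least)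
  moreover have "i \<le> length C" using i P by auto
  ultimately show "hgt C i > hgt C (leftmost_min C)" using P by force
qed

lemma lmin_eq:
  assumes "k \<le> length C" "\<And>j. j \<le> length C \<Longrightarrow> hgt C k \<le> hgt C j"
    "\<And>i. i < k \<Longrightarrow> hgt C i > hgt C k"
  shows "leftmost_min C = k"
  unfolding leftmost_min_def
proof (rule Least_equality)
  show "k \<le> length C \<and> (\<forall>j\<le>length C. hgt C k \<le> hgt C j)" using assms by auto
next
  fix y assume "y \<le> length C \<and> (\<forall>j\<le>length C. hgt C y \<le> hgt C j)"
  then show "k \<le> y" using assms by (meson linorder_not_le not_less)
qed

definition tA :: "path \<Rightarrow> nat \<Rightarrow> nat" where
  "tA H x = (LEAST i. hgt H i = hgt H x)"

definition tB :: "path \<Rightarrow> nat \<Rightarrow> nat" where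
  "tB H x = (if \<exists>i. x \<le> i \<and> i \<le> length H \<and> hgt H i < hgt H x
     then Suc (GREATEST i. x \<le> i \<and> i \<le> length H \<and> hgt H i < hgt H x) else x)"

definition tinv :: "path \<times> nat \<Rightarrow> path \<times> path \<times> path" where
  "tinv = (\<lambda>(H, x). let a = tA H x; b = tB H x in
     (take (x - a) (drop a H), take (b - x) (drop x H), take a H @ drop b H))"

lemma tA_props:
  assumes "x \<le> length H" "hgt H x < 0"
  shows "tA H x \<le> x" "hgt H (tA H x) = hgt H x" "\<And>i. i < tA H x \<Longrightarrow> hgt H i > hgt H x"
proof -
  show "tA H x \<le> x" unfolding tA_def by (rule Least_le) simp
  show a: "hgt H (tA H x) = hgt H x" unfolding tA_def by (rule LeastI[of _ x]) simp
  fix i assume i: "i < tA H x"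
  show "hgt H i > hgt H x"
  proof (rule ccontr)
    assume "\<not> ?thesis"
    then have "hgt H i \<le> hgt H x" by simp
    moreover have "i \<le> length H" using i \<open>tA H x \<le> x\<close> assms by simp
    ultimately obtain m where m: "m \<le> i" "hgt H m = hgt H x"
      using ivt_down[of 0 i H "hgt H x"] assms by auto
    then have "tA H x \<le> m" unfolding tA_def by (simp add: Least_le)
    then show False using m i by simp
  qed
qed

lemma tB_props:
  assumes "x \<le> length H" "hgt H x < 0" "hgt H (length H) = 0"
  shows "x \<le> tB H x" "tB H x \<le> length H" "hgt H (tB H x) = hgt H x"
    "\<And>i. tB H x \<le> i \<Longrightarrow> i \<le> length H \<Longrightarrow> hgt H i \<ge> hgt H x"
    "tB H x \<noteq> x \<Longrightarrow> x < tB H x \<and> H ! (tB H x - 1)"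
proof -
  let ?P = "\<lambda>i. x \<le> i \<and> i \<le> length H \<and> hgt H i < hgt H x"
  have "x \<le> tB H x \<and> tB H x \<le> length H \<and> hgt H (tB H x) = hgt H x \<and>
    (\<forall>i. tB H x \<le> i \<longrightarrow> i \<le> length H \<longrightarrow> hgt H i \<ge> hgt H x) \<and>
    (tB H x \<noteq> x \<longrightarrow> x < tB H x \<and> H ! (tB H x - 1))"
  proof (cases "\<exists>i. ?P i")
    case True
    then obtain i0 where "?P i0" by blast
    let ?g = "GREATEST i. ?P i"
    have bnd: "\<And>y. ?P y \<Longrightarrow> y \<le> length H" by simp
    have g: "?P ?g" by (rule GreatestI_nat[of ?P i0 "length H", OF \<open>?P i0\<close> bnd])
    have gmax: "\<And>y. ?P y \<Longrightarrow> y \<le> ?g" by (rule Greatest_le_nat[of ?P _ "length H", OF _ bnd])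
    have tb: "tB H x = Suc ?g" using True by (simp add: tB_def)
    have "?g \<noteq> length H" using g assms by auto
    then have glt: "?g < length H" using g by simp
    have "\<not> ?P (Suc ?g)" using gmax by fastforce
    then have ge: "hgt H (Suc ?g) \<ge> hgt H x" using g glt by auto
    have st: "hgt H (Suc ?g) = hgt H ?g + 1 \<or> hgt H (Suc ?g) = hgt H ?g - 1"
      by (rule hgt_step[OF glt])
    then have up: "hgt H (Suc ?g) = hgt H ?g + 1" "hgt H (Suc ?g) = hgt H x" using g ge by auto
    have "H ! ?g" by (rule hgt_up[OF glt up(1)])
    moreover have rest: "\<forall>i. Suc ?g \<le> i \<longrightarrow> i \<le> length H \<longrightarrow> hgt H i \<ge> hgt H x"
    proof (intro allI impI)
      fix i assume "Suc ?g \<le> i" "i \<le> length H"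
      then have "\<not> ?P i" using gmax by fastforce
      then show "hgt H i \<ge> hgt H x" using \<open>Suc ?g \<le> i\<close> g \<open>i \<le> length H\<close> by auto
    qed
    ultimately show ?thesis using tb g glt up by auto
  next
    case False
    have "tB H x = x" unfolding tB_def by (rule if_not_P[OF False])
    then show ?thesis using False assms by force
  qed
  then show "x \<le> tB H x" "tB H x \<le> length H" "hgt H (tB H x) = hgt H x"
    "\<And>i. tB H x \<le> i \<Longrightarrow> i \<le> length H \<Longrightarrow> hgt H i \<ge> hgt H x"
    "tB H x \<noteq> x \<Longrightarrow> x < tB H x \<and> H ! (tB H x - 1)" by auto
qed



lemma split3:
  assumes "a \<le> x" "x \<le> b" "b \<le> length H"
  shows "take a H @ take (x - a) (drop a H) @ take (b - x) (drop x H) @ drop b H = H"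
proof -
  have 1: "take x H = take a H @ take (x - a) (drop a H)" using take_add[of a "x-a" H] assms by simp
  have 2: "take b H = take x H @ take (b - x) (drop x H)" using take_add[of x "b-x" H] assms by simp
  show ?thesis using 1 2 by (metis append.assoc append_take_drop_id)
qed

lemma hgt_seg: "a \<le> x \<Longrightarrow> x \<le> length H \<Longrightarrow> hgt (take (x - a) (drop a H)) (x - a) = hgt H x - hgt H a"
  by (simp add: hgt_take hgt_drop)

lemma tmap_tinv:
  assumes d: "(H, x) \<in> D n" and neg: "hgt H x < 0"
  shows "tinv (H, x) \<in> V n \<and> tmap (tinv (H, x)) = (H, x)"
proof -
  define a where "a = tA H x"
  define b where "b = tB H x"
  define A where "A = take (x - a) (drop a H)"
  define B where "B = take (b - x) (drop x H)"
  define C where "C = take a H @ drop b H"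
  define h where "h = hgt H x"
  have xl: "x \<le> length H" and uH: "ups H = n" "downs H = n" using d by (auto simp: D_iff)
  have hl: "hgt H (length H) = 0" using uH by (simp add: hgt_len)
  have ax: "a \<le> x" and ha: "hgt H a = h" and abv: "\<And>i. i < a \<Longrightarrow> hgt H i > h"
    using tA_props[OF xl neg] unfolding a_def h_def by auto
  have xb: "x \<le> b" and bl: "b \<le> length H" and hb: "hgt H b = h"
    and aft: "\<And>i. b \<le> i \<Longrightarrow> i \<le> length H \<Longrightarrow> hgt H i \<ge> h"
    and bup: "b \<noteq> x \<Longrightarrow> x < b \<and> H ! (b - 1)"
    using tB_props[OF xl neg hl] unfolding b_def h_def by auto
  have tinv_eq: "tinv (H, x) = (A, B, C)"
    by (simp add: tinv_def a_def b_def A_def B_def C_def Let_def)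
  have decomp: "take a H @ A @ B @ drop b H = H" unfolding A_def B_def
    using split3[OF ax xb bl] .
  have lA: "length A = x - a" and lB: "length B = b - x" and lC: "length C = a + (length H - b)"
    using ax xb bl xl by (auto simp: A_def B_def C_def)
  have hA: "hgt A (length A) = 0" using hgt_seg[OF ax] xl ha by (simp add: lA A_def h_def)
  have hB: "hgt B (length B) = 0" using hgt_seg[OF xb bl] hb lB by (simp add: B_def h_def)
  have hC: "hgt C j = (if j \<le> a then hgt H j else hgt H (b + (j - a)))" for j
  proof -
    have la: "length (take a H) = a" using ax xl by simp
    show ?thesis using ax xb bl hb ha la
      by (auto simp: C_def hgt_append hgt_take hgt_drop min_def)
  qed
  have hC': "hgt C (length C) = 0"
    using hC[of "length C"] lC bl hl xb ax by (cases "length H = b") (auto simp: hb ha)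
  have lm: "leftmost_min C = a"
  proof (rule lmin_eq)
    show "a \<le> length C" using lC by simp
  next
    fix j assume "j \<le> length C"
    then show "hgt C a \<le> hgt C j" using hC[of j] hC[of a] ha abv[of j] aft[of "b + (j - a)"] lC bl
      by (cases "j < a") (auto simp: not_less)
  next
    fix i assume "i < a" then show "hgt C i > hgt C a" using hC[of i] hC[of a] ha abv by auto
  qed
  have ups_sum: "ups A + ups B + ups C = n"
    using arg_cong[OF decomp, of ups] uH by (simp add: C_def)
  have T: "(A, B, C) \<in> T n" using hA hB hC' ups_sum by (simp add: T_iff bal_iff)
  have negC: "\<exists>i \<le> length C. hgt C i < 0" using hC[of a] ha neg lC by (intro exI[of _ a]) (auto simp: h_def)
  have lastB: "B = [] \<or> last B = True"
  proof (cases "b = x")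
    case True then show ?thesis by (simp add: B_def)
  next
    case False
    then have "x < b" "H ! (b - 1)" using bup by auto
    then have "B \<noteq> []" "last B = H ! (b - 1)" using bl
      by (auto simp: B_def last_conv_nth)
    then show ?thesis using \<open>H ! (b - 1)\<close> by simp
  qed
  have V: "(A, B, C) \<in> V n" using T negC lastB by (simp add: V_def)
  have "take a C = take a H" "drop a C = drop b H" using ax xl by (auto simp: C_def)
  then have "tmap (A, B, C) = (H, x)" using decomp lA ax xl lC
    by (simp add: tmap_def lm Let_def)
  then show ?thesis using V tinv_eq by simp
qed



lemma hgt4: "hgt (C1 @ A @ B @ C2) i = hgt C1 i + hgt A (i - length C1)
   + hgt B (i - length C1 - length A) + hgt C2 (i - length C1 - length A - length B)"
  by (simp add: hgt_append)

lemma hgt_bal: "hgt A (length A) = 0 \<Longrightarrow> length A \<le> j \<Longrightarrow> hgt A j = 0"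
  using hgt_ge by metis

lemma tmap_D:
  assumes "(A, B, C) \<in> T n"
  shows "tmap (A, B, C) \<in> D n"
proof -
  have k: "leftmost_min C \<le> length C" by (rule lmin_props)
  have "ups (take (leftmost_min C) C) + ups (drop (leftmost_min C) C) = ups C"
    by (metis append_take_drop_id ups_append)
  moreover have "downs (take (leftmost_min C) C) + downs (drop (leftmost_min C) C) = downs C"
    by (metis append_take_drop_id downs_append)
  ultimately show ?thesis using assms k by (auto simp: tmap_def Let_def D_iff T_iff)
qed

lemma tinv_tmap:
  assumes V: "(A, B, C) \<in> V n"
  shows "hgt (fst (tmap (A, B, C))) (snd (tmap (A, B, C))) < 0 \<and> tinv (tmap (A, B, C)) = (A, B, C)"
proof -
  define k where "k = leftmost_min C"
  define m where "m = hgt C k"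
  define H where "H = take k C @ A @ B @ drop k C"
  define x where "x = k + length A"
  have kl: "k \<le> length C" unfolding k_def by (rule lmin_props)
  have kmin: "\<And>j. j \<le> length C \<Longrightarrow> m \<le> hgt C j" unfolding m_def k_def by (rule lmin_props)
  have kleft: "\<And>i. i < k \<Longrightarrow> hgt C i > m" unfolding m_def k_def by (rule lmin_props)
  have tm: "tmap (A, B, C) = (H, x)" using kl by (simp add: tmap_def k_def H_def x_def Let_def)
  have T: "(A, B, C) \<in> T n" and negC: "\<exists>i \<le> length C. hgt C i < 0" and lB: "B = [] \<or> last B = True"
    using V by (auto simp: V_def)
  have hA: "hgt A (length A) = 0" and hB: "hgt B (length B) = 0" using T by (auto simp: T_iff bal_iff)
  have lH: "length H = length C + length A + length B" using kl by (simp add: H_def)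
  have hH: "hgt H i = hgt C (min i k) + hgt A (i - k) + hgt B (i - k - length A)
      + (hgt C (k + (i - k - length A - length B)) - m)" for i
    using kl by (simp add: H_def hgt4 hgt_take hgt_drop m_def min.commute)
  have m0: "m < 0" using negC kmin by force
  have hx: "hgt H x = m" using hH[of x] hA hgt_bal[OF hB, of 0] by (simp add: x_def m_def)
  have late: "hgt H i = hgt C (i - length A - length B)" if "x + length B \<le> i" for i
  proof -
    have "hgt A (i - k) = 0" "hgt B (i - k - length A) = 0" using that hA hB hgt_bal
      by (auto simp: x_def)
    moreover have "min i k = k" using that by (simp add: x_def)
    moreover have "k + (i - k - length A - length B) = i - length A - length B" using that by (simp add: x_def)
    ultimately show ?thesis using hH[of i] by (simp add: m_def)
  qed
  have lateg: "hgt H i \<ge> m" if "x + length B \<le> i" "i \<le> length H" for i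
    using late[OF that(1)] kmin[of "i - length A - length B"] that lH by simp
  have ta: "tA H x = k" unfolding tA_def hx
  proof (rule Least_equality)
    show "hgt H k = m" using hH[of k] by (simp add: m_def)
  next
    fix y assume "hgt H y = m"
    then show "k \<le> y" using hH[of y] kleft[of y] by (cases "y < k") (auto simp: m_def)
  qed
  have tb: "tB H x = x + length B"
  proof (cases "B = []")
    case True
    have nex: "\<not> (\<exists>i. x \<le> i \<and> i \<le> length H \<and> hgt H i < hgt H x)" using lateg True hx by force
    have "tB H x = x" unfolding tB_def by (rule if_not_P[OF nex])
    then show ?thesis using True by simp
  next
    case False
    then have lt: "last B" using lB by simp
    define g where "g = x + length B - 1"
    have lB0: "length B > 0" using False by simp
    have gx: "x \<le> g" "Suc g = x + length B" using lB0 unfolding g_def by arith+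
    have "B ! (length B - 1)" using lt False by (simp add: last_conv_nth)
    then have "hgt B (length B - 1) = -1" using hgt_Suc[of "length B - 1" B] hB False
      by (simp add: stepval_def)
    moreover have "hgt H g = m + hgt B (length B - 1)"
    proof -
      have "min g k = k" "g - k = length A + (length B - 1)" using lB0 unfolding g_def x_def by (auto simp del: length_greater_0_conv)
      then show ?thesis using hH[of g] hgt_bal[OF hA, of "length A + (length B - 1)"] False
        by (simp add: m_def)
    qed
    ultimately have hg: "hgt H g = m - 1" by simp
    have Pg: "x \<le> g \<and> g \<le> length H \<and> hgt H g < hgt H x" using hg hx gx lH kl
      by (auto simp: x_def)
    have gr: "(GREATEST i. x \<le> i \<and> i \<le> length H \<and> hgt H i < hgt H x) = g"
    proof (rule Greatest_equality)
      show "x \<le> g \<and> g \<le> length H \<and> hgt H g < hgt H x" by (rule Pg)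
    next
      fix y assume "x \<le> y \<and> y \<le> length H \<and> hgt H y < hgt H x"
      then show "y \<le> g" using lateg[of y] hx gx by (cases "x + length B \<le> y") auto
    qed
    show ?thesis unfolding tB_def using Pg gr gx by auto
  qed
  have "tinv (H, x) = (take (x - k) (drop k H), take (length B) (drop x H), take k H @ drop (x + length B) H)"
    by (simp add: tinv_def ta tb Let_def)
  also have "\<dots> = (A, B, C)"
    using kl by (simp add: H_def x_def)
  finally have "tinv (H, x) = (A, B, C)" .
  then show ?thesis using tm hx m0 by simp
qed



definition fl3 :: "path \<times> path \<times> path \<Rightarrow> path \<times> path \<times> path" where
  "fl3 = (\<lambda>(A, B, C). (fl A, fl B, fl C))"

definition sinv :: "path \<times> nat \<Rightarrow> path \<times> path \<times> path" where
  "sinv = (\<lambda>(H, x). fl3 (tinv (fl H, x)))"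

lemma fl3_fl3[simp]: "fl3 (fl3 y) = y" by (cases y) (simp add: fl3_def)

lemma smap_fl: "smap y = (fl (fst (tmap (fl3 y))), snd (tmap (fl3 y)))"
proof (cases y)
  case (fields A B C)
  have "leftmost_min (fl C) = leftmost_max C" using leftmost_max_fl[of "fl C"] by simp
  then show ?thesis using fields
    by (simp add: smap_def tmap_def fl3_def Let_def take_fl drop_fl fl_append)
qed

lemma T_fl: "fl3 y \<in> T n \<longleftrightarrow> y \<in> T n"
  by (cases y) (auto simp: fl3_def T_iff)

lemma U_fl: "fl3 y \<in> V n \<longleftrightarrow> y \<in> U n"
proof (cases y)
  case (fields A B C)
  have "(fl B = [] \<or> last (fl B) = True) \<longleftrightarrow> (B = [] \<or> last B = False)"
    by (cases "B = []") (auto simp: last_fl)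
  then show ?thesis using fields T_fl[of y n] by (simp add: fl3_def V_def U_def)
qed

lemma D_fl: "(fl H, x) \<in> D n \<longleftrightarrow> (H, x) \<in> D n"
  by (auto simp: D_iff)

lemma sinv_smap:
  assumes "y \<in> U n"
  shows "hgt (fst (smap y)) (snd (smap y)) > 0 \<and> sinv (smap y) = y"
proof -
  obtain A B C where y3: "fl3 y = (A, B, C)" by (cases "fl3 y") auto
  have "(A, B, C) \<in> V n" using assms U_fl[of y n] y3 by simp
  have yy: "y = fl3 (A, B, C)" using y3 fl3_fl3[of y] by simp
  from tinv_tmap[OF \<open>(A, B, C) \<in> V n\<close>] y3 show ?thesis
    by (simp add: smap_fl sinv_def case_prod_beta yy)
qed

lemma smap_sinv:
  assumes "(H, x) \<in> D n" "hgt H x > 0"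
  shows "sinv (H, x) \<in> U n \<and> smap (sinv (H, x)) = (H, x)"
proof -
  have "(fl H, x) \<in> D n" "hgt (fl H) x < 0" using assms D_fl by auto
  from tmap_tinv[OF this] have w: "tinv (fl H, x) \<in> V n" "tmap (tinv (fl H, x)) = (fl H, x)" by auto
  have "sinv (H, x) \<in> U n" using w(1) U_fl[of "fl3 (tinv (fl H, x))" n] by (simp add: sinv_def)
  moreover have "smap (sinv (H, x)) = (H, x)" using w(2) by (simp add: smap_fl sinv_def)
  ultimately show ?thesis by simp
qed

lemma smap_D: "y \<in> T n \<Longrightarrow> smap y \<in> D n"
proof -
  assume "y \<in> T n"
  then have "fl3 y \<in> T n" using T_fl by simp
  then obtain A B C where "fl3 y = (A, B, C)" "(A, B, C) \<in> T n" by (cases "fl3 y") auto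
  then have "tmap (fl3 y) \<in> D n" using tmap_D by simp
  then show ?thesis using D_fl[of "fst (tmap (fl3 y))" "snd (tmap (fl3 y))" n]
    by (simp add: smap_fl)
qed



definition oneside :: "path \<Rightarrow> nat \<Rightarrow> bool" where
  "oneside C p = ((\<forall>i. p \<le> i \<and> i \<le> length C \<longrightarrow> hgt C i \<ge> 0)
                 \<or> (\<forall>i. p \<le> i \<and> i \<le> length C \<longrightarrow> hgt C i \<le> 0))"

definition zp :: "path \<Rightarrow> nat" where
  "zp C = (LEAST p. p \<le> length C \<and> hgt C p = 0 \<and> oneside C p)"

definition zinv :: "path \<times> path \<times> path \<Rightarrow> path \<times> path \<times> path" where
  "zinv = (\<lambda>(A, B, C). (A, take (zp C) C, drop (zp C) C))"

lemma oneside_fl: "oneside (fl C) p = oneside C p"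
  unfolding oneside_def by auto

lemma zp_fl: "zp (fl C) = zp C"
  unfolding zp_def by (simp add: oneside_fl)

lemma zinv_fl: "zinv (fl3 y) = fl3 (zinv y)"
  by (cases y) (simp add: zinv_def fl3_def zp_fl take_fl drop_fl)

lemma fl_Nil2[simp]: "fl [] = []" by (simp add: fl_def)

lemma zmap_fl: "zmap (fl3 y) = fl3 (zmap y)"
  by (cases y) (simp add: zmap_def fl3_def fl_append)

lemma R_fl: "fl3 y \<in> R n \<longleftrightarrow> y \<in> R n"
  by (cases y) (auto simp: R_def fl3_def T_iff)

lemma V_fl: "fl3 y \<in> U n \<longleftrightarrow> y \<in> V n"
  using U_fl[of "fl3 y" n] by simp

lemma J_fl: "fl3 y \<in> J n \<longleftrightarrow> y \<in> J n"
  unfolding J_def using T_fl R_fl U_fl V_fl by blast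

lemma I_fl: "fl3 y \<in> I n \<longleftrightarrow> y \<in> I n"
  unfolding I_def using U_fl V_fl by blast

lemma nozero_oneside:
  assumes "q \<le> r" "r \<le> length C" "hgt C q = 0" "hgt C r = 0"
    "\<And>m. q < m \<Longrightarrow> m < r \<Longrightarrow> hgt C m \<noteq> 0"
  shows "(\<forall>i. q \<le> i \<and> i \<le> r \<longrightarrow> hgt C i \<ge> 0) \<or> (\<forall>i. q \<le> i \<and> i \<le> r \<longrightarrow> hgt C i \<le> 0)"
proof (rule ccontr)
  assume "\<not> ?thesis"
  then obtain i1 i2 where i: "q \<le> i1" "i1 \<le> r" "hgt C i1 < 0" "q \<le> i2" "i2 \<le> r" "hgt C i2 > 0"
    by (auto simp: not_le)
  then obtain m where m: "min i1 i2 \<le> m" "m \<le> max i1 i2" "hgt C m = 0"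
    using ivt[of i1 C i2 0] assms by auto
  have "i1 \<noteq> q" "i2 \<noteq> q" "i1 \<noteq> r" "i2 \<noteq> r" using i assms by auto
  then have "q < m" "m < r" using m i by auto
  then show False using assms(5) m by blast
qed

lemma J_z_pos:
  assumes J: "(A, B, C) \<in> J n" and pos: "hgt C 1 > 0"
  shows "zmap (A, B, C) \<in> I n \<and> zinv (zmap (A, B, C)) = (A, B, C)"
proof -
  have T: "(A, B, C) \<in> T n" and nR: "(A, B, C) \<notin> R n" and nU: "(A, B, C) \<notin> U n"
    and nV: "(A, B, C) \<notin> V n" using J by (auto simp: J_def)
  have Cne: "C \<noteq> []" using T nR by (auto simp: R_def)
  then have lC: "1 \<le> length C" by (cases C) auto
  have exp: "\<exists>i \<le> length C. hgt C i > 0" using pos lC by blast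
  then have Bl: "B \<noteq> [] \<and> last B" using nU T by (auto simp: U_def)
  then have Cnn: "\<And>i. i \<le> length C \<Longrightarrow> hgt C i \<ge> 0" using nV T by (auto simp: V_def not_less)
  have hB: "hgt B (length B) = 0" and hC: "hgt C (length C) = 0" using T by (auto simp: T_iff bal_iff)
  have lB0: "length B > 0" using Bl by simp
  have "B ! (length B - 1)" using Bl by (metis last_conv_nth)
  then have hB1: "hgt B (length B - 1) = -1" using hgt_Suc[of "length B - 1" B] hB lB0
    by (simp add: stepval_def)
  define BC where "BC = B @ C"
  have hBC: "hgt BC i = hgt B i + hgt C (i - length B)" for i by (simp add: BC_def hgt_append)
  have late: "hgt BC i = hgt C (i - length B)" if "length B \<le> i" for i
    using hBC[of i] hgt_bal[OF hB that] by simp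
  have zp: "zp BC = length B" unfolding zp_def
  proof (rule Least_equality)
    show "length B \<le> length BC \<and> hgt BC (length B) = 0 \<and> oneside BC (length B)"
      unfolding oneside_def using late Cnn hB by (auto simp: BC_def)
  next
    fix p assume p: "p \<le> length BC \<and> hgt BC p = 0 \<and> oneside BC p"
    show "length B \<le> p"
    proof (rule ccontr)
      assume "\<not> ?thesis"
      then have "p \<le> length B - 1" by simp
      moreover have "hgt BC (length B - 1) = -1" using hBC[of "length B - 1"] hB1 lB0 by simp
      moreover have "hgt BC (length B + 1) > 0" using late[of "length B + 1"] pos by simp
      moreover have "length B + 1 \<le> length BC" using lC by (simp add: BC_def)
      moreover have "length B - 1 \<le> length BC" by (simp add: BC_def)
      moreover have "p \<le> length B + 1" using \<open>p \<le> length B - 1\<close> by simp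
      ultimately show False using p unfolding oneside_def
      proof -
        assume a: "p \<le> length B - 1" "hgt BC (length B - 1) = -1" "0 < hgt BC (length B + 1)"
          "length B + 1 \<le> length BC" "length B - 1 \<le> length BC" "p \<le> length B + 1"
          "p \<le> length BC \<and> hgt BC p = 0 \<and>
     ((\<forall>i. p \<le> i \<and> i \<le> length BC \<longrightarrow> 0 \<le> hgt BC i) \<or> (\<forall>i. p \<le> i \<and> i \<le> length BC \<longrightarrow> hgt BC i \<le> 0))"
        then show False
        proof (elim conjE disjE)
          assume "\<forall>i. p \<le> i \<and> i \<le> length BC \<longrightarrow> 0 \<le> hgt BC i"
          then have "0 \<le> hgt BC (length B - 1)" using a by blast
          then show False using a by simp
        next
          assume "\<forall>i. p \<le> i \<and> i \<le> length BC \<longrightarrow> hgt BC i \<le> 0"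
          then have "hgt BC (length B + 1) \<le> 0" using a by blast
          then show False using a by simp
        qed
      qed
    qed
  qed
  have z: "zmap (A, B, C) = (A, [], BC)" by (simp add: zmap_def BC_def)
  have "zinv (A, [], BC) = (A, B, C)" unfolding zinv_def using zp by (simp add: BC_def)
  moreover have "(A, [], BC) \<in> I n"
  proof -
    have "(A, [], BC) \<in> T n" using T by (simp add: T_iff BC_def)
    moreover have "\<exists>i \<le> length BC. hgt BC i > 0" using late[of "length B + 1"] pos lC
      by (intro exI[of _ "length B + 1"]) (simp add: BC_def)
    moreover have "\<exists>i \<le> length BC. hgt BC i < 0" using hBC[of "length B - 1"] hB1 lB0
      by (intro exI[of _ "length B - 1"]) (simp add: BC_def)
    ultimately show ?thesis by (simp add: I_def U_def V_def)
  qed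
  ultimately show ?thesis using z by simp
qed

lemma J_z:
  assumes J: "y \<in> J n"
  shows "zmap y \<in> I n \<and> zinv (zmap y) = y"
proof -
  obtain A B C where y: "y = (A, B, C)" by (cases y) auto
  have T: "(A, B, C) \<in> T n" and nR: "(A, B, C) \<notin> R n" using J y by (auto simp: J_def)
  have Cne: "C \<noteq> []" using T nR by (auto simp: R_def)
  then have lC: "0 < length C" by simp
  have "hgt C 1 = stepval (C ! 0)" using hgt_Suc[OF lC] by simp
  then have "hgt C 1 > 0 \<or> hgt C 1 < 0" by (auto simp: stepval_def)
  then show ?thesis
  proof
    assume "hgt C 1 > 0" then show ?thesis using J_z_pos J y by simp
  next
    assume "hgt C 1 < 0"
    then have "hgt (fl C) 1 > 0" by simp
    moreover have "(fl A, fl B, fl C) \<in> J n" using J_fl[of y n] J y by (simp add: fl3_def)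
    ultimately have "zmap (fl3 y) \<in> I n \<and> zinv (zmap (fl3 y)) = fl3 y"
      using J_z_pos[of "fl A" "fl B" "fl C" n] y by (simp add: fl3_def)
    then show ?thesis using I_fl zmap_fl zinv_fl by (metis fl3_fl3)
  qed
qed



lemma zp_props:
  assumes bal: "hgt C (length C) = 0"
  shows "zp C \<le> length C" "hgt C (zp C) = 0" "oneside C (zp C)"
    "\<And>q. q < zp C \<Longrightarrow> \<not> (q \<le> length C \<and> hgt C q = 0 \<and> oneside C q)"
proof -
  let ?P = "\<lambda>p. p \<le> length C \<and> hgt C p = 0 \<and> oneside C p"
  have "?P (length C)" using bal unfolding oneside_def
    by (metis le_antisym order.refl)
  then have "?P (zp C)" unfolding zp_def by (rule LeastI)
  then show "zp C \<le> length C" "hgt C (zp C) = 0" "oneside C (zp C)" by auto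
  fix q assume "q < zp C" then show "\<not> ?P q" unfolding zp_def by (rule not_less_Least)
qed

lemma last_zero_before:
  assumes "0 < r" "r \<le> length C"
  obtains q where "q < r" "hgt C q = 0" "\<And>m. q < m \<Longrightarrow> m < r \<Longrightarrow> hgt C m \<noteq> 0"
proof -
  let ?P = "\<lambda>q. q < r \<and> hgt C q = 0"
  have p0: "?P 0" using assms by simp
  have b: "\<And>y. ?P y \<Longrightarrow> y \<le> r" by simp
  have "?P (Greatest ?P)" by (rule GreatestI_nat[of ?P 0 r, OF p0 b])
  moreover have "\<And>m. ?P m \<Longrightarrow> m \<le> Greatest ?P" by (rule Greatest_le_nat[of ?P _ r, OF _ b])
  ultimately show ?thesis using that by (meson not_le)
qed

lemma I_z_pos:
  assumes I: "(A, B, C) \<in> I n" and nn: "\<And>i. zp C \<le> i \<Longrightarrow> i \<le> length C \<Longrightarrow> hgt C i \<ge> 0"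
  shows "zinv (A, B, C) \<in> J n"
proof -
  define p where "p = zp C"
  have T: "(A, B, C) \<in> T n" using I by (auto simp: I_def U_def)
  have B0: "B = []" using I by (auto simp: I_def U_def V_def)
  obtain ip where ip: "ip \<le> length C" "hgt C ip > 0" using I by (auto simp: I_def U_def)
  obtain ineg where ineg: "ineg \<le> length C" "hgt C ineg < 0" using I by (auto simp: I_def V_def)
  have hC: "hgt C (length C) = 0" using T by (auto simp: T_iff bal_iff)
  have pl: "p \<le> length C" and hp: "hgt C p = 0" and pmin: "\<And>q. q < p \<Longrightarrow> \<not> (q \<le> length C \<and> hgt C q = 0 \<and> oneside C q)"
    using zp_props[where C=C, OF hC] by (auto simp: p_def)
  have nn': "\<And>i. p \<le> i \<Longrightarrow> i \<le> length C \<Longrightarrow> hgt C i \<ge> 0" using nn p_def by simp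
  have p0: "0 < p" using nn'[of ineg] ineg by (cases "p = 0") auto
  have lC0: "0 < length C" using ip by (cases "ip = 0") auto
  have plt: "p < length C"
  proof -
    obtain q where q: "q < length C" "hgt C q = 0" "\<And>m. q < m \<Longrightarrow> m < length C \<Longrightarrow> hgt C m \<noteq> 0"
      using last_zero_before[OF lC0 order.refl] by blast
    have "oneside C q" unfolding oneside_def using nozero_oneside[of q "length C" C] q hC by auto
    then have "\<not> q < p" using pmin q by auto
    then show ?thesis using q by simp
  qed
  have "hgt C (Suc p) = 1"
    using hgt_step[OF plt] hp nn'[of "Suc p"] plt by auto
  have lastB: "C ! (p - 1)"
  proof (rule ccontr)
    assume nc: "\<not> C ! (p - 1)"
    have "hgt C p = hgt C (p - 1) + stepval (C ! (p - 1))" using hgt_Suc[of "p - 1" C] p0 plt by simp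
    then have h1: "hgt C (p - 1) = 1" using nc hp by (simp add: stepval_def)
    obtain q where q: "q < p" "hgt C q = 0" "\<And>m. q < m \<Longrightarrow> m < p \<Longrightarrow> hgt C m \<noteq> 0"
      using last_zero_before[OF p0 pl] by blast
    have "(\<forall>i. q \<le> i \<and> i \<le> p \<longrightarrow> hgt C i \<ge> 0) \<or> (\<forall>i. q \<le> i \<and> i \<le> p \<longrightarrow> hgt C i \<le> 0)"
      using nozero_oneside[of q p C] q pl hp by auto
    moreover have "q \<le> p - 1" using q by simp
    ultimately have "\<forall>i. q \<le> i \<and> i \<le> p \<longrightarrow> hgt C i \<ge> 0" using h1 by force
    then have "\<forall>i. q \<le> i \<and> i \<le> length C \<longrightarrow> hgt C i \<ge> 0" using nn' by (meson nle_le)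
    then have "oneside C q" by (simp add: oneside_def)
    then show False using pmin[of q] q pl by simp
  qed
  define B' where "B' = take p C"
  define C' where "C' = drop p C"
  have zi: "zinv (A, B, C) = (A, B', C')" by (simp add: zinv_def B'_def C'_def p_def)
  have hC': "hgt C' i = hgt C (p + i)" for i using hgt_drop[OF pl, of i] hp by (simp add: C'_def)
  have lC': "length C' = length C - p" by (simp add: C'_def)
  have T': "(A, B', C') \<in> T n"
  proof -
    have "hgt B' (length B') = 0" using hp pl by (simp add: B'_def hgt_take min_def)
    moreover have "hgt C' (length C') = 0" using hC' lC' hC pl by simp
    moreover have "ups B' + ups C' = ups C" "downs B' + downs C' = downs C"
      by (metis B'_def C'_def append_take_drop_id ups_append downs_append)+
    ultimately show ?thesis using T B0 by (auto simp: T_iff bal_iff)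
  qed
  have C'ne: "C' \<noteq> []" using plt by (simp add: C'_def)
  have B'ne: "B' \<noteq> []" using p0 lC0 by (simp add: B'_def)
  have lB': "last B'"
  proof -
    have "last B' = B' ! (length B' - 1)" using B'ne by (rule last_conv_nth)
    also have "\<dots> = C ! (p - 1)" using p0 plt by (simp add: B'_def)
    finally show ?thesis using lastB by simp
  qed
  have "(A, B', C') \<notin> R n" using C'ne by (simp add: R_def)
  moreover have "(A, B', C') \<notin> U n" using B'ne lB' by (simp add: U_def)
  moreover have "(A, B', C') \<notin> V n"
  proof -
    have "\<And>i. i \<le> length C' \<Longrightarrow> hgt C' i \<ge> 0" using hC' nn' lC' pl
      by (metis le_add1 le_diff_conv2 add.commute)
    then show ?thesis by (force simp: V_def)
  qed
  ultimately show ?thesis using zi T' by (simp add: J_def)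
qed

lemma I_z:
  assumes I: "y \<in> I n"
  shows "zinv y \<in> J n \<and> zmap (zinv y) = y"
proof -
  obtain A B C where y: "y = (A, B, C)" by (cases y) auto
  have B0: "B = []" using I y by (auto simp: I_def U_def V_def)
  have "zmap (zinv y) = y" using y B0 by (simp add: zinv_def zmap_def)
  moreover have "zinv y \<in> J n"
  proof -
    have "hgt C (length C) = 0" using I y by (auto simp: I_def U_def T_iff bal_iff)
    then have "oneside C (zp C)" by (rule zp_props)
    then show ?thesis unfolding oneside_def
    proof
      assume "\<forall>i. zp C \<le> i \<and> i \<le> length C \<longrightarrow> 0 \<le> hgt C i"
      then show ?thesis using I_z_pos[of A B C n] I y by auto
    next
      assume a: "\<forall>i. zp C \<le> i \<and> i \<le> length C \<longrightarrow> hgt C i \<le> 0"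
      have "(fl A, fl B, fl C) \<in> I n" using I_fl[of y n] I y by (simp add: fl3_def)
      moreover have "\<And>i. zp (fl C) \<le> i \<Longrightarrow> i \<le> length (fl C) \<Longrightarrow> hgt (fl C) i \<ge> 0"
        using a zp_fl by simp
      ultimately have "zinv (fl3 y) \<in> J n" using I_z_pos[of "fl A" "fl B" "fl C" n] y
        by (simp add: fl3_def)
      then show ?thesis using zinv_fl J_fl by metis
    qed
  qed
  ultimately show ?thesis by simp
qed



definition ginv :: "nat \<Rightarrow> path \<times> nat \<Rightarrow> path \<times> path \<times> path" where
  "ginv n = (\<lambda>(H, x). if hgt H x = 0 then (take x H, drop x H, [])
     else if hgt H x > 0 then sinv (H, x)
     else (let y = tinv (H, x) in if y \<in> U n then zinv y else y))"

lemma R_not_U: "y \<in> R n \<Longrightarrow> y \<notin> U n" by (auto simp: R_def U_def)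
lemma R_not_V: "y \<in> R n \<Longrightarrow> y \<notin> V n" by (auto simp: R_def V_def)

lemma gmap_D:
  assumes "y \<in> T n" shows "gmap n y \<in> D n"
proof -
  obtain A B C where y: "y = (A, B, C)" by (cases y) auto
  show ?thesis
  proof (cases "y \<in> R n")
    case True then show ?thesis using assms y by (auto simp: gmap_def rmap_def R_def D_iff T_iff ups_downs_len[symmetric])
  next
    case nR: False
    show ?thesis
    proof (cases "y \<in> U n")
      case True then show ?thesis using nR assms smap_D by (simp add: gmap_def)
    next
      case nU: False
      show ?thesis
      proof (cases "y \<in> V n")
        case True then show ?thesis using nR nU assms tmap_D y by (simp add: gmap_def)
      next
        case False
        have "zmap y \<in> T n" using assms y by (auto simp: zmap_def T_iff)
        then show ?thesis using nR nU False tmap_D by (cases "zmap y") (simp add: gmap_def)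
      qed
    qed
  qed
qed

lemma ginv_gmap:
  assumes "y \<in> T n" shows "ginv n (gmap n y) = y"
proof -
  obtain A B C where y: "y = (A, B, C)" by (cases y) auto
  show ?thesis
  proof (cases "y \<in> R n")
    case True
    then have "C = []" "hgt A (length A) = 0" using y by (auto simp: R_def T_iff bal_iff)
    then show ?thesis using True y by (simp add: gmap_def rmap_def ginv_def hgt_append)
  next
    case nR: False
    show ?thesis
    proof (cases "y \<in> U n")
      case True
      then show ?thesis using nR sinv_smap[OF True]
        by (cases "smap y") (simp add: gmap_def ginv_def)
    next
      case nU: False
      show ?thesis
      proof (cases "y \<in> V n")
        case True
        then show ?thesis using nR nU tinv_tmap[of A B C n] y
          by (cases "tmap y") (simp add: gmap_def ginv_def Let_def)
      next
        case False
        then have J: "y \<in> J n" using assms nR nU by (simp add: J_def)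
        from J_z[OF J] have z: "zmap y \<in> I n" "zinv (zmap y) = y" by auto
        obtain A' B' C' where zy: "zmap y = (A', B', C')" by (cases "zmap y") auto
        have "(A', B', C') \<in> V n" "(A', B', C') \<in> U n" using z zy by (auto simp: I_def)
        then show ?thesis using nR nU False tinv_tmap[of A' B' C' n] z zy
          by (cases "tmap (A', B', C')") (simp add: gmap_def ginv_def Let_def)
      qed
    qed
  qed
qed

lemma gmap_ginv:
  assumes d: "d \<in> D n" shows "ginv n d \<in> T n \<and> gmap n (ginv n d) = d"
proof -
  obtain H x where dd: "d = (H, x)" by (cases d) auto
  have xl: "x \<le> length H" and uH: "ups H = n" "downs H = n" using d dd by (auto simp: D_iff)
  have hl: "hgt H (length H) = 0" using uH by (simp add: hgt_len)
  consider "hgt H x = 0" | "hgt H x > 0" | "hgt H x < 0" by linarith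
  then show ?thesis
  proof cases
    case 1
    define y where "y = (take x H, drop x H, [] :: path)"
    have g: "ginv n d = y" using 1 dd by (simp add: ginv_def y_def)
    have "hgt (take x H) (length (take x H)) = 0" using 1 xl by (simp add: hgt_take min_def)
    moreover have "hgt (drop x H) (length (drop x H)) = 0" using 1 xl hl by (simp add: hgt_drop)
    moreover have "ups (take x H) + ups (drop x H) = n"
      using uH by (metis append_take_drop_id ups_append)
    ultimately have "y \<in> T n" by (simp add: y_def T_iff bal_iff)
    then have "y \<in> R n" by (simp add: R_def y_def)
    then have "gmap n y = d" using xl dd by (simp add: gmap_def rmap_def y_def)
    then show ?thesis using g \<open>y \<in> T n\<close> by simp
  next
    case 2
    have g: "ginv n d = sinv (H, x)" using 2 dd by (simp add: ginv_def)
    from smap_sinv[of H x n] d dd 2 have s: "sinv (H, x) \<in> U n" "smap (sinv (H, x)) = (H, x)" by auto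
    have "sinv (H, x) \<notin> R n" using s R_not_U by blast
    then show ?thesis using s g dd by (auto simp: gmap_def U_def)
  next
    case 3
    define w where "w = tinv (H, x)"
    from tmap_tinv[of H x n] d dd 3 have w: "w \<in> V n" "tmap w = (H, x)" by (auto simp: w_def)
    have wR: "w \<notin> R n" using w R_not_V by blast
    show ?thesis
    proof (cases "w \<in> U n")
      case True
      then have "w \<in> I n" using w by (simp add: I_def)
      from I_z[OF this] have z: "zinv w \<in> J n" "zmap (zinv w) = w" by auto
      have g: "ginv n d = zinv w" using 3 dd True by (simp add: ginv_def w_def Let_def)
      have "gmap n (zinv w) = tmap w" using z by (simp add: gmap_def J_def)
      then show ?thesis using g z w dd by (simp add: J_def)
    next
      case False
      have g: "ginv n d = w" using 3 dd False by (simp add: ginv_def w_def Let_def)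
      then show ?thesis using False wR w dd by (auto simp: gmap_def V_def)
    qed
  qed
qed

lemma bij: "bij_betw (gmap n) (T n) (D n)"
proof (rule bij_betw_byWitness[where f' = "ginv n"])
  show "\<forall>a\<in>T n. ginv n (gmap n a) = a" using ginv_gmap by blast
  show "\<forall>a'\<in>D n. gmap n (ginv n a') = a'" using gmap_ginv by blast
  show "gmap n ` T n \<subseteq> D n" using gmap_D by blast
  show "ginv n ` D n \<subseteq> T n" using gmap_ginv by blast
qed



definition Bal :: "nat \<Rightarrow> path set" where
  "Bal i = {P. ups P = i \<and> downs P = i}"

lemma shuffles_iff: "P \<in> shuffles (replicate a True) (replicate b False) \<longleftrightarrow> ups P = a \<and> downs P = b"
proof (induction P arbitrary: a b)
  case Nil then show ?case by (auto simp: ups_def downs_def)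
next
  case (Cons z zs)
  show ?case
  proof (cases z)
    case True
    then show ?thesis using Cons[of "a - 1" b]
      by (cases a) (auto simp: Cons_in_shuffles_iff ups_def downs_def Cons_replicate_eq)
  next
    case False
    then show ?thesis using Cons[of a "b - 1"]
      by (cases b) (auto simp: Cons_in_shuffles_iff ups_def downs_def Cons_replicate_eq)
  qed
qed

lemma Bal_shuffles: "Bal i = shuffles (replicate i True) (replicate i False)"
  using shuffles_iff by (auto simp: Bal_def)

lemma card_Bal: "card (Bal i) = (2 * i choose i)"
proof -
  have "set (replicate i True) \<inter> set (replicate i False) = {}" by auto
  from card_disjoint_shuffles[OF this] show ?thesis by (simp add: Bal_shuffles mult_2)
qed

lemma finite_Bal: "finite (Bal i)" by (simp add: Bal_shuffles)

lemma T_UN: "T n = (\<Union>(i, j, k) \<in> {(i, j, k). i + j + k = n}. Bal i \<times> Bal j \<times> Bal k)"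
  by (auto simp: T_def Bal_def)

lemma finite_S: "finite {(i, j, k). i + j + k = (n::nat)}"
proof (rule finite_subset)
  show "{(i, j, k). i + j + k = n} \<subseteq> {..n} \<times> {..n} \<times> {..n}" by auto
qed auto

lemma card_T: "card (T n) = (\<Sum>(i, j, k) \<in> {(i, j, k). i + j + k = n}.
             (2 * i choose i) * (2 * j choose j) * (2 * k choose k))"
proof -
  have "card (T n) = (\<Sum>s \<in> {(i, j, k). i + j + k = n}. card ((\<lambda>(i, j, k). Bal i \<times> Bal j \<times> Bal k) s))"
    unfolding T_UN
  proof (rule card_UN_disjoint[OF finite_S])
    show "\<forall>s\<in>{(i, j, k). i + j + k = n}. finite ((\<lambda>(i, j, k). Bal i \<times> Bal j \<times> Bal k) s)"
      by (auto simp: finite_Bal)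
    show "\<forall>s\<in>{(i, j, k). i + j + k = n}. \<forall>t\<in>{(i, j, k). i + j + k = n}. s \<noteq> t \<longrightarrow>
      (\<lambda>(i, j, k). Bal i \<times> Bal j \<times> Bal k) s \<inter> (\<lambda>(i, j, k). Bal i \<times> Bal j \<times> Bal k) t = {}"
      by (auto simp: Bal_def)
  qed
  also have "\<dots> = (\<Sum>(i, j, k) \<in> {(i, j, k). i + j + k = n}.
             (2 * i choose i) * (2 * j choose j) * (2 * k choose k))"
    by (rule sum.cong) (auto simp: card_cartesian_product card_Bal)
  finally show ?thesis .
qed

lemma card_D: "card (D n) = (2 * n + 1) * (2 * n choose n)"
proof -
  have "D n = Sigma (Bal n) (\<lambda>H. {..length H})" by (auto simp: D_def Bal_def)
  then have "card (D n) = (\<Sum>H \<in> Bal n. card {..length H})"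
    by (simp add: card_SigmaI finite_Bal)
  also have "\<dots> = (\<Sum>H \<in> Bal n. 2 * n + 1)"
    by (rule sum.cong) (auto simp: Bal_def ups_downs_len[symmetric])
  also have "\<dots> = (2 * n + 1) * (2 * n choose n)" by (simp add: card_Bal)
  finally show ?thesis .
qed

theorem theorem2:
  fixes n :: nat
  assumes "n \<ge> 1"
  shows "bij_betw (gmap n) (T n) (D n)
    \<and> (2 * n + 1) * (2 * n choose n)
        = (\<Sum>(i, j, k) \<in> {(i, j, k). i + j + k = n}.
             (2 * i choose i) * (2 * j choose j) * (2 * k choose k))"
proof
  show b: "bij_betw (gmap n) (T n) (D n)" by (rule bij)
  show "(2 * n + 1) * (2 * n choose n) = (\<Sum>(i, j, k) \<in> {(i, j, k). i + j + k = n}.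
             (2 * i choose i) * (2 * j choose j) * (2 * k choose k))"
    using bij_betw_same_card[OF b] card_T card_D by simp
qed

end
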